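(* If there exists an unbounded function $f:\mathbb{N}\to\mathbb{R}$ such that $\prod_{i=k}^{k+n}s_i\ge f(n)$ for all $n\in\mathbb{N}$ and all $k\ge2$, then $\mathcal{S}$-DC is not competitive for the infinite server problem on the half-line $[0,\infty)$ with source $0$. In particular, if $\liminf_{i\to\infty}s_i>1$, then $\mathcal{S}$-DC is not competitive.
   Context: Infinite server problem on the half-line $[0,\infty)$ with source $0$: an unbounded number of servers initially reside at $0$; requests are revealed one by one and must be served immediately, without knowledge of future requests, by moving a server to the request; the cost is the total distance traveled. Let $\mathcal{S}=\{s_i\ge1 : i\ge2\}$ be given by a monotonic (non-decreasing or non-increasing) sequence of speeds $s_i\ge1$. Denote by $x_i$ the $i$-th server from the right. Algorithm $\mathcal{S}$-DC: if a request lies between servers $x_{i+1}$ (to its left) and $x_i$ (to its right), move them towards it with speeds $s_{i+1}$ and $1$ respectively until one of them reaches it; if no server is to the right of the request, move the rightmost server to the request. An online algorithm is competitive if there are $\rho,c$ with $ALG(\sigma)\le\rho\,OPT(\sigma)+c$ for all request sequences $\sigma$. *)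

theory Defs
  imports Complex_Main "HOL-Library.Extended_Real" "HOL-Library.Liminf_Limsup"
begin

text \<open>Configurations of the online algorithm: x i (for i \<ge> 1) is the position of the
 i-th server from the right; all servers start at the source 0 (x = (\<lambda>_. 0)).
 Index 0 is unused. Speeds s i are meaningful for i \<ge> 2.\<close>

definition dc_step :: "(nat \<Rightarrow> real) \<Rightarrow> (nat \<Rightarrow> real) \<Rightarrow> real \<Rightarrow> (nat \<Rightarrow> real) \<times> real" where
  "dc_step s x r =
     (if x 1 \<le> r then (x(1 := r), r - x 1)
      else (let i = (LEAST i. x (Suc i) \<le> r);
                t = min ((r - x (Suc i)) / s (Suc i)) (x i - r)
            in (x(i := x i - t, Suc i := x (Suc i) + s (Suc i) * t), t + s (Suc i) * t)))"

fun dc_run :: "(nat \<Rightarrow> real) \<Rightarrow> (nat \<Rightarrow> real) \<Rightarrow> real list \<Rightarrow> real" where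
  "dc_run s x [] = 0"
| "dc_run s x (r # rs) = snd (dc_step s x r) + dc_run s (fst (dc_step s x r)) rs"

definition ALG_DC :: "(nat \<Rightarrow> real) \<Rightarrow> real list \<Rightarrow> real" where
  "ALG_DC s \<sigma> = dc_run s (\<lambda>_. 0) \<sigma>"

text \<open>Offline schedules: countably many servers indexed by nat, cs j k = position of server k
 after serving the first j requests; all on the half-line, all starting at 0.\<close>

definition feasible_schedule :: "real list \<Rightarrow> (nat \<Rightarrow> nat \<Rightarrow> real) \<Rightarrow> bool" where
  "feasible_schedule \<sigma> cs \<longleftrightarrow>
     cs 0 = (\<lambda>_. 0) \<and>
     (\<forall>j\<le>length \<sigma>. \<forall>k. 0 \<le> cs j k) \<and>
     (\<forall>j<length \<sigma>. (\<exists>k. cs (Suc j) k = \<sigma> ! j) \<and> summable (\<lambda>k. \<bar>cs (Suc j) k - cs j k\<bar>))"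

definition schedule_cost :: "real list \<Rightarrow> (nat \<Rightarrow> nat \<Rightarrow> real) \<Rightarrow> real" where
  "schedule_cost \<sigma> cs = (\<Sum>j<length \<sigma>. (\<Sum>k. \<bar>cs (Suc j) k - cs j k\<bar>))"

definition OPT :: "real list \<Rightarrow> real" where
  "OPT \<sigma> = Inf {schedule_cost \<sigma> cs | cs. feasible_schedule \<sigma> cs}"

definition DC_competitive :: "(nat \<Rightarrow> real) \<Rightarrow> bool" where
  "DC_competitive s \<longleftrightarrow>
     (\<exists>\<rho> c. \<forall>\<sigma>. (\<forall>r\<in>set \<sigma>. 0 \<le> r) \<longrightarrow> ALG_DC s \<sigma> \<le> \<rho> * OPT \<sigma> + c)"

end

theory Submission
  imports Defs
begin


fun run_st :: "(nat \<Rightarrow> real) \<Rightarrow> (nat \<Rightarrow> real) \<Rightarrow> real list \<Rightarrow> (nat \<Rightarrow> real)" where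
  "run_st s x [] = x"
| "run_st s x (r # rs) = run_st s (fst (dc_step s x r)) rs"

lemma run_st_append: "run_st s x (xs @ ys) = run_st s (run_st s x xs) ys"
  by (induction xs arbitrary: x) auto

lemma step_bound:
  assumes spos: "\<And>i. 2 \<le> i \<Longrightarrow> 1 \<le> s i" and r0: "0 \<le> r"
    and ev: "\<And>k. N \<le> k \<Longrightarrow> x k = 0" and fin: "finite F"
  shows "(\<Sum>k\<in>F. fst (dc_step s x r) k - x k) \<le> snd (dc_step s x r)
         \<and> (\<forall>k. N + 2 \<le> k \<longrightarrow> fst (dc_step s x r) k = 0)"
proof (cases "x 1 \<le> r")
  case True
  have st: "dc_step s x r = (x(1 := r), r - x 1)" using True by (simp add: dc_step_def)
  have "(\<Sum>k\<in>F. (x(1 := r)) k - x k) = (\<Sum>k\<in>F. if k = 1 then r - x 1 else 0)"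
    by (rule sum.cong) auto
  also have "\<dots> \<le> r - x 1" using fin True by (simp add: sum.delta)
  finally show ?thesis using st ev by auto
next
  case False
  define i where "i = (LEAST i. x (Suc i) \<le> r)"
  have ex: "x (Suc N) \<le> r" using ev r0 by simp
  have xi1: "x (Suc i) \<le> r" unfolding i_def by (rule LeastI[of _ N], rule ex)
  have iN: "i \<le> N" unfolding i_def by (rule Least_le, rule ex)
  have i0: "i \<noteq> 0" proof assume "i = 0" thus False using xi1 False by simp qed
  then obtain i' where ii: "i = Suc i'" by (cases i) auto
  have "\<not> x (Suc i') \<le> r" using not_less_Least[of i' "\<lambda>i. x (Suc i) \<le> r"] ii i_def by auto
  hence xi: "x i > r" using ii by simp
  define t where "t = min ((r - x (Suc i)) / s (Suc i)) (x i - r)"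
  have sp: "1 \<le> s (Suc i)" using spos ii by simp
  have t0: "0 \<le> t" unfolding t_def using xi1 xi sp by auto
  have st: "dc_step s x r = (x(i := x i - t, Suc i := x (Suc i) + s (Suc i) * t), t + s (Suc i) * t)"
    using False unfolding dc_step_def Let_def i_def t_def by simp
  have pw: "\<And>k. (x(i := x i - t, Suc i := x (Suc i) + s (Suc i) * t)) k - x k
      \<le> (if k = Suc i then s (Suc i) * t else 0)"
    using t0 by auto
  have "(\<Sum>k\<in>F. (x(i := x i - t, Suc i := x (Suc i) + s (Suc i) * t)) k - x k)
      \<le> (\<Sum>k\<in>F. if k = Suc i then s (Suc i) * t else 0)"
    by (rule sum_mono, rule pw)
  also have "\<dots> \<le> s (Suc i) * t" using fin t0 sp by (simp add: sum.delta)
  also have "\<dots> \<le> t + s (Suc i) * t" using t0 by simp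
  finally have 1: "(\<Sum>k\<in>F. fst (dc_step s x r) k - x k) \<le> snd (dc_step s x r)" using st by simp
  have 2: "\<forall>k. N + 2 \<le> k \<longrightarrow> fst (dc_step s x r) k = 0" using st iN ev by auto
  show ?thesis using 1 2 by blast
qed

lemma dc_run_ge:
  assumes spos: "\<And>i. 2 \<le> i \<Longrightarrow> 1 \<le> s i" and fin: "finite F"
  shows "(\<forall>r\<in>set \<sigma>. 0 \<le> r) \<Longrightarrow> (\<And>k. N \<le> k \<Longrightarrow> x k = 0) \<Longrightarrow>
     (\<Sum>k\<in>F. run_st s x \<sigma> k - x k) \<le> dc_run s x \<sigma>"
proof (induction \<sigma> arbitrary: x N)
  case Nil
  then show ?case by simp
next
  case (Cons r rs)
  let ?y = "fst (dc_step s x r)"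
  have b: "(\<Sum>k\<in>F. ?y k - x k) \<le> snd (dc_step s x r) \<and> (\<forall>k. N + 2 \<le> k \<longrightarrow> ?y k = 0)"
    by (rule step_bound[OF spos _ Cons.prems(2) fin]) (use Cons.prems(1) in auto)
  have ih: "(\<Sum>k\<in>F. run_st s ?y rs k - ?y k) \<le> dc_run s ?y rs"
    by (rule Cons.IH[of "N+2"]) (use Cons.prems(1) b in auto)
  have "(\<Sum>k\<in>F. run_st s x (r # rs) k - x k)
      = (\<Sum>k\<in>F. run_st s ?y rs k - ?y k) + (\<Sum>k\<in>F. ?y k - x k)"
    by (simp add: sum.distrib[symmetric])
  also have "\<dots> \<le> dc_run s ?y rs + snd (dc_step s x r)" using ih b by linarith
  finally show ?case by simp
qed



fun csf :: "(real \<Rightarrow> nat) \<Rightarrow> real list \<Rightarrow> nat \<Rightarrow> nat \<Rightarrow> real" where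
  "csf g \<sigma> 0 = (\<lambda>_. 0)"
| "csf g \<sigma> (Suc j) = (csf g \<sigma> j)(g (\<sigma> ! j) := \<sigma> ! j)"

lemma csf_cases: "csf g \<sigma> j k = 0 \<or> (\<exists>j'<j. g (\<sigma> ! j') = k \<and> csf g \<sigma> j k = \<sigma> ! j')"
proof (induction j)
  case 0 then show ?case by simp
next
  case (Suc j)
  show ?case
  proof (cases "k = g (\<sigma> ! j)")
    case True then show ?thesis by auto
  next
    case False
    then show ?thesis using Suc by (auto intro: less_SucI)
  qed
qed

lemma csf_nonneg:
  assumes "\<forall>r\<in>set \<sigma>. 0 \<le> r" "j \<le> length \<sigma>"
  shows "0 \<le> csf g \<sigma> j k"
proof -
  have "csf g \<sigma> j k = 0 \<or> (\<exists>j'<j. g (\<sigma> ! j') = k \<and> csf g \<sigma> j k = \<sigma> ! j')"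
    by (rule csf_cases)
  then show ?thesis using assms by (auto dest!: nth_mem[of _ \<sigma>] intro: order.strict_trans2)
qed

lemma csf_step_fun:
  "(\<lambda>k. \<bar>csf g \<sigma> (Suc j) k - csf g \<sigma> j k\<bar>)
     = (\<lambda>k. if k = g (\<sigma> ! j) then \<bar>\<sigma> ! j - csf g \<sigma> j (g (\<sigma> ! j))\<bar> else 0)"
  by auto

lemma csf_step_sums:
  "(\<lambda>k. \<bar>csf g \<sigma> (Suc j) k - csf g \<sigma> j k\<bar>) sums \<bar>\<sigma> ! j - csf g \<sigma> j (g (\<sigma> ! j))\<bar>"
  unfolding csf_step_fun using sums_single[of "g (\<sigma> ! j)" "\<lambda>_. \<bar>\<sigma> ! j - csf g \<sigma> j (g (\<sigma> ! j))\<bar>"]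
  by simp

lemma csf_feasible:
  assumes "\<forall>r\<in>set \<sigma>. 0 \<le> r"
  shows "feasible_schedule \<sigma> (csf g \<sigma>)"
  unfolding feasible_schedule_def
proof (intro conjI allI impI)
  show "csf g \<sigma> 0 = (\<lambda>_. 0)" by simp
next
  fix j k assume "j \<le> length \<sigma>" then show "0 \<le> csf g \<sigma> j k" using csf_nonneg assms by blast
next
  fix j assume "j < length \<sigma>"
  show "\<exists>k. csf g \<sigma> (Suc j) k = \<sigma> ! j" by (rule exI[of _ "g (\<sigma> ! j)"]) simp
  show "summable (\<lambda>k. \<bar>csf g \<sigma> (Suc j) k - csf g \<sigma> j k\<bar>)"
    using csf_step_sums sums_summable by blast
qed

lemma csf_cost: "schedule_cost \<sigma> (csf g \<sigma>) = (\<Sum>j<length \<sigma>. \<bar>\<sigma> ! j - csf g \<sigma> j (g (\<sigma> ! j))\<bar>)"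
  unfolding schedule_cost_def using csf_step_sums sums_unique by (metis (no_types, lifting))

definition Phi :: "(real \<Rightarrow> nat) \<Rightarrow> real list \<Rightarrow> real \<Rightarrow> nat \<Rightarrow> nat \<Rightarrow> real" where
  "Phi g \<sigma> M K j = (\<Sum>k<K. if csf g \<sigma> j k = 0 then 2 * M else csf g \<sigma> j k)"

lemma OPT_nonneg:
  assumes "\<forall>r\<in>set \<sigma>. 0 \<le> r"
  shows "0 \<le> OPT \<sigma>"
proof -
  let ?S = "{schedule_cost \<sigma> cs | cs. feasible_schedule \<sigma> cs}"
  have ne: "?S \<noteq> {}" using csf_feasible[OF assms] by blast
  have "\<And>x. x \<in> ?S \<Longrightarrow> 0 \<le> x"
  proof -
    fix x assume "x \<in> ?S"
    then obtain cs where x: "x = schedule_cost \<sigma> cs" and f: "feasible_schedule \<sigma> cs" by blast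
    have "\<And>j. j < length \<sigma> \<Longrightarrow> 0 \<le> (\<Sum>k. \<bar>cs (Suc j) k - cs j k\<bar>)"
      using f unfolding feasible_schedule_def by (auto intro!: suminf_nonneg)
    then show "0 \<le> x" unfolding x schedule_cost_def by (auto intro: sum_nonneg)
  qed
  then show ?thesis unfolding OPT_def using ne by (intro cInf_greatest) auto
qed

lemma OPT_le_schedule:
  assumes "feasible_schedule \<sigma> cs"
  shows "OPT \<sigma> \<le> schedule_cost \<sigma> cs"
proof -
  let ?S = "{schedule_cost \<sigma> cs | cs. feasible_schedule \<sigma> cs}"
  have "bdd_below ?S"
  proof (rule bdd_belowI[of _ 0])
    fix x assume "x \<in> ?S"
    then obtain cs where x: "x = schedule_cost \<sigma> cs" and f: "feasible_schedule \<sigma> cs" by blast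
    have "\<And>j. j < length \<sigma> \<Longrightarrow> 0 \<le> (\<Sum>k. \<bar>cs (Suc j) k - cs j k\<bar>)"
      using f unfolding feasible_schedule_def by (auto intro!: suminf_nonneg)
    then show "0 \<le> x" unfolding x schedule_cost_def by (auto intro: sum_nonneg)
  qed
  then show ?thesis unfolding OPT_def using assms by (intro cInf_lower) auto
qed

lemma OPT_le:
  assumes M0: "0 \<le> M" and pos: "\<forall>r\<in>set \<sigma>. 0 < r \<and> r \<le> M"
    and gK: "\<forall>r\<in>set \<sigma>. g r < K"
    and sw: "sorted_wrt (\<lambda>u v. g u = g v \<longrightarrow> v \<le> u) \<sigma>"
  shows "OPT \<sigma> \<le> 2 * M * real K"
proof -
  have nn: "\<forall>r\<in>set \<sigma>. 0 \<le> r" using pos by auto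
  have step: "\<bar>\<sigma> ! j - csf g \<sigma> j (g (\<sigma> ! j))\<bar> \<le> Phi g \<sigma> M K j - Phi g \<sigma> M K (Suc j)"
    if j: "j < length \<sigma>" for j
  proof -
    let ?v = "\<sigma> ! j" let ?k0 = "g ?v"
    have v: "0 < ?v" "?v \<le> M" "?k0 < K" using pos gK j by auto
    let ?T = "\<lambda>j k. if csf g \<sigma> j k = 0 then 2 * M else csf g \<sigma> j k"
    have "Phi g \<sigma> M K j = ?T j ?k0 + (\<Sum>k\<in>{..<K} - {?k0}. ?T j k)"
      unfolding Phi_def using v(3) by (subst sum.remove[of _ ?k0]) auto
    moreover have "Phi g \<sigma> M K (Suc j) = ?T (Suc j) ?k0 + (\<Sum>k\<in>{..<K} - {?k0}. ?T (Suc j) k)"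
      unfolding Phi_def using v(3) by (subst sum.remove[of _ ?k0]) auto
    moreover have "(\<Sum>k\<in>{..<K} - {?k0}. ?T (Suc j) k) = (\<Sum>k\<in>{..<K} - {?k0}. ?T j k)"
      by (rule sum.cong) auto
    moreover have "?T (Suc j) ?k0 = ?v" using v by simp
    ultimately have drop: "Phi g \<sigma> M K j - Phi g \<sigma> M K (Suc j) = ?T j ?k0 - ?v" by simp
    have "csf g \<sigma> j ?k0 = 0 \<or> (\<exists>j'<j. g (\<sigma> ! j') = ?k0 \<and> csf g \<sigma> j ?k0 = \<sigma> ! j')"
      by (rule csf_cases)
    then show ?thesis
    proof
      assume z: "csf g \<sigma> j ?k0 = 0"
      then show ?thesis using drop v by simp
    next
      assume "\<exists>j'<j. g (\<sigma> ! j') = ?k0 \<and> csf g \<sigma> j ?k0 = \<sigma> ! j'"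
      then obtain j' where j': "j' < j" "g (\<sigma> ! j') = ?k0" "csf g \<sigma> j ?k0 = \<sigma> ! j'" by blast
      have le: "?v \<le> \<sigma> ! j'" using sorted_wrt_nth_less[OF sw j'(1) j] j'(2) by simp
      have "\<sigma> ! j' > 0" using pos j j' by auto
      then show ?thesis using drop le j'(3) by simp
    qed
  qed
  have tele: "(\<Sum>j<n. \<bar>\<sigma> ! j - csf g \<sigma> j (g (\<sigma> ! j))\<bar>) \<le> Phi g \<sigma> M K 0 - Phi g \<sigma> M K n"
    if "n \<le> length \<sigma>" for n
    using that
  proof (induction n)
    case 0 then show ?case by simp
  next
    case (Suc n)
    then show ?case using step[of n] by simp
  qed
  have P0: "Phi g \<sigma> M K 0 = 2 * M * real K" unfolding Phi_def by simp
  have Pn: "0 \<le> Phi g \<sigma> M K (length \<sigma>)" unfolding Phi_def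
    using csf_nonneg[OF nn, of "length \<sigma>" g] M0 by (auto intro!: sum_nonneg)
  have "OPT \<sigma> \<le> schedule_cost \<sigma> (csf g \<sigma>)" by (rule OPT_le_schedule[OF csf_feasible[OF nn]])
  also have "\<dots> \<le> 2 * M * real K" unfolding csf_cost using tele[of "length \<sigma>"] P0 Pn by simp
  finally show ?thesis .
qed



definition hh :: "real \<Rightarrow> nat \<Rightarrow> real" where "hh \<delta> j = 1 - real j * \<delta>"
definition aa :: "nat \<Rightarrow> nat \<Rightarrow> nat" where "aa L p = (if p \<le> L then 1 else p + 1 - L)"

locale cons =
  fixes s :: "nat \<Rightarrow> real" and L :: nat and \<delta> :: real and R :: nat
  assumes sge: "\<And>i. 2 \<le> i \<Longrightarrow> 1 \<le> s i"
    and dpos: "0 < \<delta>" and Rbig: "2 \<le> \<delta> * real R" and L1: "1 \<le> L"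
begin

abbreviation "h \<equiv> hh \<delta>"
abbreviation "a \<equiv> aa L"
definition AA :: "nat \<Rightarrow> real" where "AA p = prod s {Suc (a p)..Suc p}"
definition ee :: "nat \<Rightarrow> real" where "ee p = h (Suc p) / (real R * AA p)"
definition rnd :: "nat \<Rightarrow> real list" where
  "rnd p = (h (a p) + ee p) # map h [a p..<Suc p]"

definition Inv :: "nat \<Rightarrow> nat \<Rightarrow> (nat \<Rightarrow> real) \<Rightarrow> bool" where
  "Inv p r x \<longleftrightarrow>
    (\<forall>k. 1 \<le> k \<and> k + 1 < a p \<longrightarrow> h (k + 1) \<le> x k) \<and>
    (2 \<le> a p \<longrightarrow> x (a p - 1) = h (a p - 1) - real r * ee p / s (a p)) \<and>
    (\<forall>k. a p \<le> k \<and> k \<le> p \<longrightarrow> x k = h k) \<and>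
    x (Suc p) = real r * ee p * AA p \<and>
    (\<forall>k. p + 2 \<le> k \<longrightarrow> x k = 0)"

definition Mid :: "nat \<Rightarrow> nat \<Rightarrow> nat \<Rightarrow> (nat \<Rightarrow> real) \<Rightarrow> bool" where
  "Mid p r j x \<longleftrightarrow>
    (\<forall>k. 1 \<le> k \<and> k + 1 < a p \<longrightarrow> h (k + 1) \<le> x k) \<and>
    (2 \<le> a p \<longrightarrow> x (a p - 1) = h (a p - 1) - real (Suc r) * ee p / s (a p)) \<and>
    (\<forall>k. a p \<le> k \<and> k \<le> p \<and> k \<noteq> j \<longrightarrow> x k = h k) \<and>
    (j \<le> p \<longrightarrow> x j = h j + ee p * prod s {Suc (a p)..j}) \<and>
    x (Suc p) = (if j = Suc p then real (Suc r) else real r) * ee p * AA p \<and>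
    (\<forall>k. p + 2 \<le> k \<longrightarrow> x k = 0)"

lemma hh_diff: "h j - h (Suc j) = \<delta>" by (simp add: hh_def algebra_simps)
lemma hh_mono: "j \<le> k \<Longrightarrow> h k \<le> h j" using dpos by (simp add: hh_def mult_right_mono)
lemma hh_smono: "j < k \<Longrightarrow> h k < h j" using dpos by (simp add: hh_def)
lemma hh_gap: "j < k \<Longrightarrow> h k + \<delta> \<le> h j"
proof -
  assume "j < k"
  then have "real j + 1 \<le> real k" by simp
  then have "(real j + 1) * \<delta> \<le> real k * \<delta>" using dpos by (simp add: mult_right_mono)
  then show ?thesis by (simp add: hh_def algebra_simps)
qed

lemma a_ge1: "1 \<le> a p" by (simp add: aa_def, arith)
lemma a_le: "1 \<le> p \<Longrightarrow> a p \<le> p" using L1 by (simp add: aa_def, arith)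

lemma prod_ge1: "1 \<le> m \<Longrightarrow> 1 \<le> prod s {Suc m..n}"
  by (rule prod_ge_1) (auto intro!: sge)

lemma prod_pos: "1 \<le> m \<Longrightarrow> 0 < prod s {Suc m..n}"
  using prod_ge1[of m n] by linarith

lemma prod_mono_ub: "1 \<le> m \<Longrightarrow> n \<le> n' \<Longrightarrow> prod s {Suc m..n} \<le> prod s {Suc m..n'}"
proof (induction n' rule: nat.induct)
  case zero then show ?case by simp
next
  case (Suc n')
  show ?case
  proof (cases "n \<le> n'")
    case True
    have ih: "prod s {Suc m..n} \<le> prod s {Suc m..n'}" using Suc True by blast
    show ?thesis
    proof (cases "Suc m \<le> Suc n'")
      case True
      have e: "prod s {Suc m..Suc n'} = s (Suc n') * prod s {Suc m..n'}"
        by (rule prod.nat_ivl_Suc') (use True in simp)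
      have "1 \<le> s (Suc n')" using sge Suc.prems True by simp
      moreover have "0 \<le> prod s {Suc m..n'}" using prod_pos[OF Suc.prems(1), of n'] by simp
      ultimately have "prod s {Suc m..n'} \<le> s (Suc n') * prod s {Suc m..n'}"
        using mult_right_mono[of 1 "s (Suc n')" "prod s {Suc m..n'}"] by simp
      then show ?thesis using ih e by simp
    next
      case False
      then have "{Suc m..n} = {}" using True by auto
      moreover have "{Suc m..Suc n'} = {}" using False by auto
      ultimately show ?thesis by simp
    qed
  next
    case False
    then have "n = Suc n'" using Suc by simp
    then show ?thesis by simp
  qed
qed

lemma div_le1: "0 \<le> x \<Longrightarrow> 1 \<le> c \<Longrightarrow> x / c \<le> (x::real)"
  using mult_left_mono[of 1 c x] by (simp add: divide_le_eq)

lemma prod_step: "m \<le> j \<Longrightarrow> prod s {Suc m..Suc j} = prod s {Suc m..j} * s (Suc j)"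
  by (subst prod.nat_ivl_Suc') auto

context
  fixes p :: nat
  assumes p1: "1 \<le> p" and hpos: "real (Suc p) * \<delta> < 1"
    and slide: "2 \<le> a p \<Longrightarrow> 2 \<le> \<delta> * AA p"
begin

lemma A_ge1: "1 \<le> AA p" unfolding AA_def by (rule prod_ge1[OF a_ge1])
lemma h_pos: "0 < h (Suc p)" using hpos by (simp add: hh_def)
lemma R_pos: "0 < real R"
proof -
  have "R \<noteq> 0" using Rbig by (cases R) auto
  then show ?thesis by simp
qed
lemma e_pos: "0 < ee p" unfolding ee_def using h_pos R_pos A_ge1 by auto
lemma eA: "ee p * AA p = h (Suc p) / real R" unfolding ee_def using A_ge1 by (simp add: field_simps)
lemma h_le1: "h (Suc p) \<le> 1" using dpos by (simp add: hh_def)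
lemma eA_small: "ee p * AA p \<le> \<delta> / 2"
proof -
  have "ee p * AA p \<le> 1 / real R" unfolding eA using h_le1 R_pos by (simp add: divide_right_mono)
  also have "\<dots> \<le> \<delta> / 2" using Rbig R_pos by (simp add: field_simps)
  finally show ?thesis .
qed
lemma e_le_eA: "ee p \<le> ee p * AA p" using e_pos A_ge1 by simp
lemma e_small: "ee p \<le> \<delta> / 2" using e_le_eA eA_small by linarith
lemma Re_small: "2 \<le> a p \<Longrightarrow> real R * ee p \<le> \<delta> / 2"
proof -
  assume a2: "2 \<le> a p"
  have "real R * ee p = h (Suc p) / AA p" unfolding ee_def using R_pos A_ge1 by (simp add: field_simps)
  also have "\<dots> \<le> 1 / AA p" using h_le1 A_ge1 by (simp add: divide_right_mono)
  also have "\<dots> \<le> \<delta> / 2" using slide[OF a2] A_ge1 by (simp add: field_simps)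
  finally show ?thesis .
qed
lemma drift_small: "2 \<le> a p \<Longrightarrow> r \<le> R \<Longrightarrow> real r * ee p / s (a p) \<le> \<delta> / 2"
proof -
  assume a2: "2 \<le> a p" and r: "r \<le> R"
  have sa: "1 \<le> s (a p)" using sge a2 by simp
  have "real r * ee p / s (a p) \<le> real r * ee p" using sa e_pos div_le1[of "real r * ee p" "s (a p)"] by simp
  also have "\<dots> \<le> real R * ee p" using r e_pos by (simp add: mult_right_mono)
  finally show ?thesis using Re_small[OF a2] by linarith
qed
lemma prod_le_A: "j \<le> Suc p \<Longrightarrow> prod s {Suc (a p)..j} \<le> AA p"
  unfolding AA_def by (rule prod_mono_ub[OF a_ge1])


lemma Suc_r_le: "r < R \<Longrightarrow> Suc r \<le> R" by simp

lemma RA: "real R * (ee p * AA p) = h (Suc p)" unfolding eA using R_pos by simp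

lemma osc_step:
  assumes I: "Inv p r x" and r: "r < R"
  shows "Mid p r (a p) (fst (dc_step s x (h (a p) + ee p)))"
proof -
  let ?a = "a p" let ?e = "ee p" let ?v = "h (a p) + ee p"
  note I' = I[unfolded Inv_def]
  have I1: "\<And>k. 1 \<le> k \<Longrightarrow> k + 1 < ?a \<Longrightarrow> h (k + 1) \<le> x k" using I' by blast
  have I2: "2 \<le> ?a \<Longrightarrow> x (?a - 1) = h (?a - 1) - real r * ?e / s ?a" using I' by blast
  have I3: "\<And>k. ?a \<le> k \<Longrightarrow> k \<le> p \<Longrightarrow> x k = h k" using I' by blast
  have I4: "x (Suc p) = real r * ?e * AA p" using I' by blast
  have I5: "\<And>k. p + 2 \<le> k \<Longrightarrow> x k = 0" using I' by blast
  have ap: "?a \<le> p" using a_le[OF p1] .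
  have e0: "0 < ?e" using e_pos by simp
  show ?thesis
  proof (cases "?a = 1")
    case True
    have x1: "x 1 = h 1" using I3[of 1] True p1 by simp
    have st: "fst (dc_step s x ?v) = x(1 := ?v)" using x1 e0 True by (simp add: dc_step_def)
    show ?thesis unfolding Mid_def st using True I3 I4 I5 p1 by auto
  next
    case False
    then have a2: "2 \<le> ?a" using a_ge1[of p] by simp
    have sa: "1 \<le> s ?a" using sge a2 by simp
    have ds: "real (Suc r) * ?e / s ?a \<le> \<delta> / 2" using drift_small[OF a2 Suc_r_le[OF r]] .
    have es: "?e \<le> \<delta> / 2" using e_small .
    have hd: "h (?a - 1) = h ?a + \<delta>" using hh_diff[of "?a - 1"] a2 by simp
    have xa1: "x (?a - 1) = h ?a + \<delta> - real r * ?e / s ?a" using I2[OF a2] hd by simp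
    have eq1: "real (Suc r) * ?e / s ?a = real r * ?e / s ?a + ?e / s ?a" by (simp add: add_divide_distrib algebra_simps)
    have es_pos: "0 < ?e / s ?a" using e0 sa by simp
    have gt: "?v < x k" if k: "1 \<le> k" "k < ?a" for k
    proof (cases "k = ?a - 1")
      case True
      then show ?thesis using xa1 ds es eq1 es_pos by simp
    next
      case False
      then have "k + 1 < ?a" using k by simp
      then have "h (k + 1) \<le> x k" using I1 k by simp
      moreover have "h (?a - 1) \<le> h (k + 1)" using hh_mono[of "k + 1" "?a - 1"] \<open>k + 1 < ?a\<close> by simp
      ultimately show ?thesis using hd es dpos by simp
    qed
    have x1: "?v < x 1" using gt[of 1] a2 by simp
    have xa: "x ?a = h ?a" using I3 ap by simp
    have least: "(LEAST i. x (Suc i) \<le> ?v) = ?a - 1"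
    proof (rule Least_equality)
      show "x (Suc (?a - 1)) \<le> ?v" using xa a2 e0 by simp
    next
      fix y assume "x (Suc y) \<le> ?v"
      then show "?a - 1 \<le> y" using gt[of "Suc y"] by (cases "Suc y < ?a") auto
    qed
    have t: "min ((?v - x (Suc (?a - 1))) / s (Suc (?a - 1))) (x (?a - 1) - ?v) = ?e / s ?a"
    proof -
      have "Suc (?a - 1) = ?a" using a2 by simp
      moreover have "?e / s ?a \<le> x (?a - 1) - ?v" using xa1 ds es eq1 by linarith
      ultimately show ?thesis using xa by simp
    qed
    have sac: "s ?a * (?e / s ?a) = ?e" using sa by simp
    have st: "fst (dc_step s x ?v) = x(?a - 1 := x (?a - 1) - ?e / s ?a, ?a := x ?a + ?e)"
      using x1 a2 sa unfolding dc_step_def Let_def least t by (simp add: sac)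
    have pa: "prod s {Suc ?a..?a} = 1" by simp
    show ?thesis unfolding Mid_def st using a2 ap I1 I3 I4 I5 xa1 hd eq1 xa p1 by auto
  qed
qed


lemma restore_step:
  assumes M: "Mid p r j x" and r: "r < R" and j: "a p \<le> j" "j \<le> p"
  shows "Mid p r (Suc j) (fst (dc_step s x (h j)))"
proof -
  let ?a = "a p" let ?e = "ee p" let ?d = "ee p * prod s {Suc (a p)..j}"
  note M' = M[unfolded Mid_def]
  have M1: "\<And>k. 1 \<le> k \<Longrightarrow> k + 1 < ?a \<Longrightarrow> h (k + 1) \<le> x k" using M' by blast
  have M2: "2 \<le> ?a \<Longrightarrow> x (?a - 1) = h (?a - 1) - real (Suc r) * ?e / s ?a" using M' by blast
  have M3: "\<And>k. ?a \<le> k \<Longrightarrow> k \<le> p \<Longrightarrow> k \<noteq> j \<Longrightarrow> x k = h k" using M' by blast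
  have M4: "x j = h j + ?d" using M' j by blast
  have M5: "x (Suc p) = real r * ?e * AA p" using M' j by auto
  have M6: "\<And>k. p + 2 \<le> k \<Longrightarrow> x k = 0" using M' by blast
  have e0: "0 < ?e" using e_pos by simp
  have d0: "0 < ?d" using e0 prod_pos[OF a_ge1[of p], of j] by simp
  have eAs: "?e * AA p \<le> \<delta> / 2" using eA_small .
  have gt: "h j < x k" if k: "1 \<le> k" "k \<le> j" for k
  proof -
    consider (eq) "k = j" | (ch) "?a \<le> k" "k < j" | (dr) "2 \<le> ?a" "k = ?a - 1" | (old) "k + 1 < ?a"
      using k by linarith
    then show ?thesis
    proof cases
      case eq then show ?thesis using M4 d0 by simp
    next
      case ch then show ?thesis using M3[of k] j hh_smono[of k j] by simp
    next
      case dr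
      have ds: "real (Suc r) * ?e / s ?a \<le> \<delta> / 2" using drift_small[OF dr(1) Suc_r_le[OF r]] .
      have hd: "h (?a - 1) = h ?a + \<delta>" using hh_diff[of "?a - 1"] dr by simp
      have "h j \<le> h ?a" using hh_mono j by simp
      then show ?thesis using M2[OF dr(1)] dr(2) ds hd dpos by simp
    next
      case old
      have "h (k + 1) \<le> x k" using M1 k old by simp
      moreover have "h ?a < h (k + 1)" using hh_smono old by simp
      moreover have "h j \<le> h ?a" using hh_mono j by simp
      ultimately show ?thesis by simp
    qed
  qed
  have x1: "h j < x 1" using gt[of 1] j a_ge1[of p] by simp
  have hRA: "real R * (?e * AA p) = h (Suc p)" using RA .
  have rR: "real (Suc r) \<le> real R" using r by simp
  have eA0: "0 \<le> ?e * AA p" using e0 A_ge1 by simp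
  have sRA: "real (Suc r) * (?e * AA p) \<le> h (Suc p)"
    using mult_right_mono[OF rR eA0] hRA by simp
  have nxt: "x (Suc j) \<le> h j \<and> s (Suc j) * ?d \<le> h j - x (Suc j)"
  proof (cases "j < p")
    case True
    have xs: "x (Suc j) = h (Suc j)" using M3[of "Suc j"] True j by simp
    have "s (Suc j) * ?d = ?e * prod s {Suc ?a..Suc j}" using prod_step[OF j(1)] by (simp add: ac_simps)
    also have "\<dots> \<le> ?e * AA p" using prod_le_A[of "Suc j"] True e0 by (simp add: mult_left_mono)
    finally show ?thesis using xs hh_diff[of j] eAs dpos by simp
  next
    case False
    then have jp: "j = p" using j by simp
    have eqd: "s (Suc j) * ?d = ?e * AA p"
    proof -
      have "s (Suc j) * ?d = ?e * (prod s {Suc ?a..j} * s (Suc j))" by (simp add: ac_simps)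
      also have "\<dots> = ?e * AA p" using prod_step[OF j(1)] jp unfolding AA_def by simp
      finally show ?thesis .
    qed
    have hp: "h (Suc p) \<le> h j" using hh_mono jp by simp
    have ex: "real (Suc r) * (?e * AA p) = real r * ?e * AA p + ?e * AA p" by (simp add: algebra_simps)
    have xs: "x (Suc j) = real r * ?e * AA p" using M5 jp by simp
    show ?thesis using eqd hp ex xs sRA eA0 by linarith
  qed
  have ss: "1 \<le> s (Suc j)" using sge a_ge1[of p] j by simp
  have least: "(LEAST i. x (Suc i) \<le> h j) = j"
  proof (rule Least_equality)
    show "x (Suc j) \<le> h j" using nxt by simp
  next
    fix y assume "x (Suc y) \<le> h j"
    then show "j \<le> y" using gt[of "Suc y"] by (cases "Suc y \<le> j") auto
  qed
  have t: "min ((h j - x (Suc j)) / s (Suc j)) (x j - h j) = ?d"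
  proof -
    have "?d \<le> (h j - x (Suc j)) / s (Suc j)" using nxt ss by (simp add: field_simps)
    then show ?thesis using M4 by simp
  qed
  have st: "fst (dc_step s x (h j)) = x(j := h j, Suc j := x (Suc j) + s (Suc j) * ?d)"
    using x1 unfolding dc_step_def Let_def least t using M4 by simp
  have ps: "prod s {Suc ?a..Suc j} = prod s {Suc ?a..j} * s (Suc j)" using prod_step[OF j(1)] .
  show ?thesis unfolding Mid_def st
  proof (intro conjI allI impI)
    fix k assume "1 \<le> k \<and> k + 1 < ?a"
    then show "h (k + 1) \<le> (x(j := h j, Suc j := x (Suc j) + s (Suc j) * ?d)) k" using M1 j by auto
  next
    assume "2 \<le> ?a"
    then show "(x(j := h j, Suc j := x (Suc j) + s (Suc j) * ?d)) (?a - 1) = h (?a - 1) - real (Suc r) * ?e / s ?a"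
      using M2 j by auto
  next
    fix k assume "?a \<le> k \<and> k \<le> p \<and> k \<noteq> Suc j"
    then show "(x(j := h j, Suc j := x (Suc j) + s (Suc j) * ?d)) k = h k" using M3 by auto
  next
    assume sj: "Suc j \<le> p"
    have "x (Suc j) = h (Suc j)" using M3[of "Suc j"] sj j by simp
    then show "(x(j := h j, Suc j := x (Suc j) + s (Suc j) * ?d)) (Suc j) = h (Suc j) + ?e * prod s {Suc ?a..Suc j}"
      using ps by (simp add: ac_simps)
  next
    show "(x(j := h j, Suc j := x (Suc j) + s (Suc j) * ?d)) (Suc p) = (if Suc j = Suc p then real (Suc r) else real r) * ?e * AA p"
    proof (cases "j = p")
      case True
      have "s (Suc j) * ?d = ?e * AA p" using ps True unfolding AA_def by (simp add: ac_simps)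
      then show ?thesis using True M5 by (simp add: algebra_simps)
    next
      case False
      then show ?thesis using M5 j by simp
    qed
  next
    fix k assume "p + 2 \<le> k"
    then show "(x(j := h j, Suc j := x (Suc j) + s (Suc j) * ?d)) k = 0" using M6 j by auto
  qed
qed


lemma restores:
  assumes "Mid p r j x" "r < R" "a p \<le> j" "j \<le> Suc p"
  shows "Mid p r (Suc p) (run_st s x (map h [j..<Suc p]))"
  using assms
proof (induction "Suc p - j" arbitrary: j x)
  case 0
  then have "j = Suc p" by simp
  then show ?case using 0 by simp
next
  case (Suc m)
  then have jp: "j \<le> p" by simp
  have up: "[j..<Suc p] = j # [Suc j..<Suc p]" using jp by (simp add: upt_conv_Cons)
  have M': "Mid p r (Suc j) (fst (dc_step s x (h j)))"
    by (rule restore_step) (use Suc.prems jp in auto)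
  have "Mid p r (Suc p) (run_st s (fst (dc_step s x (h j))) (map h [Suc j..<Suc p]))"
    by (rule Suc.hyps(1)) (use Suc.hyps(2) M' Suc.prems jp in auto)
  then show ?case using up by simp
qed

lemma round_step:
  assumes "Inv p r x" "r < R"
  shows "Inv p (Suc r) (run_st s x (rnd p))"
proof -
  have M0: "Mid p r (a p) (fst (dc_step s x (h (a p) + ee p)))" by (rule osc_step[OF assms])
  have M1: "Mid p r (Suc p) (run_st s (fst (dc_step s x (h (a p) + ee p))) (map h [a p..<Suc p]))"
    by (rule restores[OF M0 assms(2)]) (use a_le[OF p1] in auto)
  have eq: "run_st s x (rnd p) = run_st s (fst (dc_step s x (h (a p) + ee p))) (map h [a p..<Suc p])"
    unfolding rnd_def by simp
  show ?thesis using M1 unfolding eq Mid_def Inv_def by auto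
qed

lemma rounds:
  "Inv p r x \<Longrightarrow> r + m \<le> R \<Longrightarrow> Inv p (r + m) (run_st s x (concat (replicate m (rnd p))))"
proof (induction m arbitrary: r x)
  case 0 then show ?case by simp
next
  case (Suc m)
  have I1: "Inv p (Suc r) (run_st s x (rnd p))" by (rule round_step) (use Suc.prems in auto)
  have "Inv p (Suc r + m) (run_st s (run_st s x (rnd p)) (concat (replicate m (rnd p))))"
    by (rule Suc.IH[OF I1]) (use Suc.prems in simp)
  then show ?case by (simp add: run_st_append)
qed

lemma transition:
  assumes "Inv p R x"
  shows "Inv (Suc p) 0 x"
proof -
  note I' = assms[unfolded Inv_def]
  let ?a = "a p"
  have I1: "\<And>k. 1 \<le> k \<Longrightarrow> k + 1 < ?a \<Longrightarrow> h (k + 1) \<le> x k" using I' by blast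
  have I2: "2 \<le> ?a \<Longrightarrow> x (?a - 1) = h (?a - 1) - real R * ee p / s ?a" using I' by blast
  have I3: "\<And>k. ?a \<le> k \<Longrightarrow> k \<le> p \<Longrightarrow> x k = h k" using I' by blast
  have I4: "x (Suc p) = real R * ee p * AA p" using I' by blast
  have I5: "\<And>k. p + 2 \<le> k \<Longrightarrow> x k = 0" using I' by blast
  have ap: "?a \<le> p" using a_le[OF p1] .
  have x4: "x (Suc p) = h (Suc p)" using I4 RA by (simp add: ac_simps)
  have cases_a: "(a (Suc p) = ?a \<and> ?a = 1) \<or> a (Suc p) = Suc ?a"
    unfolding aa_def using L1 by auto
  show ?thesis
    using cases_a
  proof
    assume A: "a (Suc p) = ?a \<and> ?a = 1"
    show ?thesis unfolding Inv_def using A I3 x4 I5 ap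
      by (auto simp: le_Suc_eq)
  next
    assume A: "a (Suc p) = Suc ?a"
    have ret: "h (k + 1) \<le> x k" if k: "1 \<le> k" "k + 1 < Suc ?a" for k
    proof (cases "k + 1 < ?a")
      case True then show ?thesis using I1 k by simp
    next
      case False
      then have ka: "k = ?a - 1" "2 \<le> ?a" using k by auto
      have ds: "real R * ee p / s ?a \<le> \<delta> / 2" using drift_small[OF ka(2), of R] by simp
      have hd: "h (?a - 1) = h ?a + \<delta>" using hh_diff[of "?a - 1"] ka by simp
      have "k + 1 = ?a" using ka by simp
      then have hk: "h (k + 1) = h ?a" by simp
      have xk: "x k = h (?a - 1) - real R * ee p / s ?a" using I2[OF ka(2)] ka(1) by simp
      show ?thesis using hk xk ds hd dpos by linarith
    qed
    show ?thesis unfolding Inv_def A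
    proof (intro conjI allI impI)
      fix k assume "1 \<le> k \<and> k + 1 < Suc ?a" then show "h (k + 1) \<le> x k" using ret by blast
    next
      show "x (Suc ?a - 1) = h (Suc ?a - 1) - real 0 * ee (Suc p) / s (Suc ?a)" using I3 ap by simp
    next
      fix k assume "Suc ?a \<le> k \<and> k \<le> Suc p"
      then show "x k = h k" using I3 x4 by (cases "k = Suc p") auto
    next
      show "x (Suc (Suc p)) = real 0 * ee (Suc p) * AA (Suc p)" using I5 by simp
    next
      fix k assume "Suc p + 2 \<le> k" then show "x k = 0" using I5 by simp
    qed
  qed
qed

end

definition ph :: "nat \<Rightarrow> real list" where "ph q = concat (replicate R (rnd q))"
definition cnd :: "nat \<Rightarrow> bool" where
  "cnd q \<longleftrightarrow> 1 \<le> q \<and> real (Suc q) * \<delta> < 1 \<and> (2 \<le> a q \<longrightarrow> 2 \<le> \<delta> * AA q)"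
definition sig :: "nat \<Rightarrow> real list" where "sig P = h 1 # concat (map ph [1..<Suc P])"

lemma phase_step:
  assumes c: "cnd p" and I: "Inv p 0 x"
  shows "Inv (Suc p) 0 (run_st s x (ph p))"
proof -
  have c1: "1 \<le> p" and c2: "real (Suc p) * \<delta> < 1" and c3: "2 \<le> a p \<Longrightarrow> 2 \<le> \<delta> * AA p"
    using c unfolding cnd_def by auto
  have "Inv p (0 + R) (run_st s x (concat (replicate R (rnd p))))"
    using rounds[OF c1 c2 c3 I, of R] by simp
  then show ?thesis unfolding ph_def using transition[OF c1 c2 c3] by simp
qed

lemma phases:
  "(\<And>q. p \<le> q \<Longrightarrow> q < p + m \<Longrightarrow> cnd q) \<Longrightarrow> Inv p 0 x \<Longrightarrow>
     Inv (p + m) 0 (run_st s x (concat (map ph [p..<p + m])))"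
proof (induction m arbitrary: p x)
  case 0 then show ?case by simp
next
  case (Suc m)
  have I1: "Inv (Suc p) 0 (run_st s x (ph p))" by (rule phase_step) (use Suc.prems in auto)
  have I2: "Inv (Suc p + m) 0 (run_st s (run_st s x (ph p)) (concat (map ph [Suc p..<Suc p + m])))"
    by (rule Suc.IH[OF _ I1]) (use Suc.prems in auto)
  have up: "[p..<p + Suc m] = p # [Suc p..<Suc p + m]" by (simp add: upt_conv_Cons)
  show ?case using I2 up by (simp add: run_st_append)
qed

lemma init_inv:
  assumes "\<delta> < 1"
  shows "Inv 1 0 (run_st s (\<lambda>_. 0) [h 1])"
proof -
  have h1: "0 \<le> h 1" using assms by (simp add: hh_def)
  have st: "run_st s (\<lambda>_. 0) [h 1] = (\<lambda>_. 0)(1 := h 1)" using h1 by (simp add: dc_step_def)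
  have a1: "a 1 = 1" using L1 by (simp add: aa_def)
  show ?thesis unfolding st Inv_def a1 by auto
qed

lemma Inv_lower:
  assumes "Inv q 0 y" "1 \<le> k" "k \<le> q"
  shows "h (Suc k) \<le> y k"
proof -
  note I' = assms(1)[unfolded Inv_def]
  consider (old) "k + 1 < a q" | (dr) "2 \<le> a q" "k = a q - 1" | (ch) "a q \<le> k"
    using assms(2) by linarith
  then show ?thesis
  proof cases
    case old then show ?thesis using I' assms by simp
  next
    case dr
    then have "y k = h (a q - 1)" using I' by simp
    moreover have "Suc k = a q" using dr by simp
    ultimately show ?thesis using hh_mono[of "a q - 1" "a q"] by simp
  next
    case ch
    then have "y k = h k" using I' assms by simp
    then show ?thesis using hh_mono[of k "Suc k"] by simp
  qed
qed

lemma set_rnd: "set (rnd q) = insert (h (a q) + ee q) (h ` {a q..q})"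
  unfolding rnd_def by auto

lemma set_ph: "set (ph q) \<subseteq> set (rnd q)"
  unfolding ph_def by (cases R) auto

lemma set_sig: "r \<in> set (sig P) \<Longrightarrow> r = h 1 \<or> (\<exists>q. 1 \<le> q \<and> q \<le> P \<and> r \<in> set (rnd q))"
  unfolding sig_def using set_ph by fastforce


lemma sig_vals:
  assumes c: "\<And>q. 1 \<le> q \<Longrightarrow> q \<le> P \<Longrightarrow> cnd q" and d1: "\<delta> < 1"
    and r: "r \<in> set (sig P)"
  shows "0 < r \<and> r \<le> 1"
proof -
  from set_sig[OF r] show ?thesis
  proof
    assume "r = h 1" then show ?thesis using d1 dpos by (simp add: hh_def)
  next
    assume "\<exists>q. 1 \<le> q \<and> q \<le> P \<and> r \<in> set (rnd q)"
    then obtain q where q: "1 \<le> q" "q \<le> P" "r \<in> set (rnd q)" by blast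
    have cq: "cnd q" using c q by simp
    have c1: "1 \<le> q" and c2: "real (Suc q) * \<delta> < 1" and c3: "2 \<le> a q \<Longrightarrow> 2 \<le> \<delta> * AA q"
      using cq unfolding cnd_def by auto
    have hp: "0 < h (Suc q)" using h_pos[OF c1 c2 c3] .
    have e0: "0 < ee q" using e_pos[OF c1 c2 c3] .
    have es: "ee q \<le> \<delta> / 2" using e_small[OF c1 c2 c3] .
    have aq: "1 \<le> a q" "a q \<le> q" using a_ge1 a_le[OF c1] by auto
    from q(3) show ?thesis unfolding set_rnd
    proof
      assume rr: "r = h (a q) + ee q"
      have "h (Suc q) \<le> h (a q)" using hh_mono aq by simp
      moreover have "h (a q) \<le> h 1" using hh_mono aq by simp
      moreover have "h 1 = 1 - \<delta>" by (simp add: hh_def)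
      ultimately show ?thesis using rr hp e0 es dpos by linarith
    next
      assume "r \<in> h ` {a q..q}"
      then obtain j where j: "a q \<le> j" "j \<le> q" "r = h j" by auto
      have "h (Suc q) \<le> h j" using hh_mono j by simp
      moreover have "h j \<le> 1" using dpos by (simp add: hh_def)
      ultimately show ?thesis using j hp by linarith
    qed
  qed
qed

lemma ALG_lower:
  assumes c: "\<And>q. 1 \<le> q \<Longrightarrow> q \<le> P \<Longrightarrow> cnd q" and d1: "\<delta> < 1"
  shows "real (Suc P) * h (P + 2) \<le> ALG_DC s (sig P)"
proof -
  let ?y = "run_st s (\<lambda>_. 0) (sig P)"
  have sg: "sig P = [h 1] @ concat (map ph [1..<1 + P])" unfolding sig_def by simp
  have Iy: "Inv (1 + P) 0 ?y"
    unfolding sg run_st_append by (rule phases[OF _ init_inv[OF d1]]) (use c in auto)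
  have nn: "\<forall>r\<in>set (sig P). 0 \<le> r" using sig_vals[OF c d1] by fastforce
  have "(\<Sum>k\<in>{1..Suc P}. ?y k - 0) \<le> dc_run s (\<lambda>_. 0) (sig P)"
    by (rule dc_run_ge[OF sge _ nn]) auto
  moreover have "(\<Sum>k\<in>{1..Suc P}. h (P + 2)) \<le> (\<Sum>k\<in>{1..Suc P}. ?y k - 0)"
  proof (rule sum_mono)
    fix k assume k: "k \<in> {1..Suc P}"
    have "h (Suc k) \<le> ?y k" using Inv_lower[OF Iy] k by simp
    moreover have "h (P + 2) \<le> h (Suc k)" using hh_mono k by simp
    ultimately show "h (P + 2) \<le> ?y k - 0" by simp
  qed
  ultimately show ?thesis unfolding ALG_DC_def by simp
qed

definition gg :: "real \<Rightarrow> nat" where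
  "gg v = (if \<exists>j. v = h j then Suc (nat \<lfloor>(1 - v) / \<delta>\<rfloor> mod L) else 0)"

lemma gg_h: "gg (h j) = Suc (j mod L)"
proof -
  have "(1 - h j) / \<delta> = real j" using dpos by (simp add: hh_def)
  then show ?thesis unfolding gg_def by auto
qed

lemma gg_osc:
  assumes "0 < e" "e < \<delta>"
  shows "gg (h b + e) = 0"
proof -
  have "h b + e \<noteq> h j" for j
  proof (cases "j < b")
    case True
    then have "h b + \<delta> \<le> h j" using hh_gap by simp
    then show ?thesis using assms by simp
  next
    case False
    then have "h j \<le> h b" using hh_mono by simp
    then show ?thesis using assms by simp
  qed
  then show ?thesis unfolding gg_def by auto
qed

lemma window:
  assumes "a q \<le> j" "j \<le> q" "a q \<le> j'" "j' \<le> q" "j mod L = j' mod L"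
  shows "j = j'"
proof -
  have w: "q < a q + L" using L1 unfolding aa_def by auto
  have "j \<le> j' \<Longrightarrow> j = j'"
  proof -
    assume le: "j \<le> j'"
    have "L dvd (j' - j)" using assms(5) mod_eq_dvd_iff_nat[OF le, of L] by simp
    moreover have "j' - j < L" using assms w le by linarith
    ultimately have d: "L dvd (j' - j)" and lt: "j' - j < L" by auto
    show "j = j'"
    proof (rule ccontr)
      assume "j \<noteq> j'"
      then have "0 < j' - j" using le by simp
      then have "L \<le> j' - j" using dvd_imp_le[OF d] by simp
      then show False using lt by simp
    qed
  qed
  moreover have "j' \<le> j \<Longrightarrow> j = j'"
  proof -
    assume le: "j' \<le> j"
    have "L dvd (j - j')" using assms(5) mod_eq_dvd_iff_nat[OF le, of L] by simp
    moreover have "j - j' < L" using assms w le by linarith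
    ultimately have d: "L dvd (j - j')" and lt: "j - j' < L" by auto
    show "j = j'"
    proof (rule ccontr)
      assume "j \<noteq> j'"
      then have "0 < j - j'" using le by simp
      then have "L \<le> j - j'" using dvd_imp_le[OF d] by simp
      then show False using lt by simp
    qed
  qed
  ultimately show ?thesis by linarith
qed

lemma a_mono: "q \<le> q' \<Longrightarrow> a q \<le> a q'" unfolding aa_def by auto
lemma a_eq: "q < q' \<Longrightarrow> a q = a q' \<Longrightarrow> q' \<le> L" unfolding aa_def by (auto split: if_splits)

lemma e_mono:
  assumes "cnd q" "cnd q'" "q \<le> q'" "a q = a q'"
  shows "ee q' \<le> ee q"
proof -
  have c1: "1 \<le> q" and c2: "real (Suc q) * \<delta> < 1" and c3: "2 \<le> a q \<Longrightarrow> 2 \<le> \<delta> * AA q"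
    using assms(1) unfolding cnd_def by auto
  have d1: "1 \<le> q'" and d2: "real (Suc q') * \<delta> < 1" and d3: "2 \<le> a q' \<Longrightarrow> 2 \<le> \<delta> * AA q'"
    using assms(2) unfolding cnd_def by auto
  have pm: "prod s {Suc (a q)..Suc q} \<le> prod s {Suc (a q)..Suc q'}"
    by (rule prod_mono_ub[OF a_ge1]) (use assms(3) in simp)
  have AA: "AA q \<le> AA q'" unfolding AA_def by (metis assms(4) pm)
  have A1: "1 \<le> AA q" using A_ge1[OF c1 c2 c3] .
  have hq: "h (Suc q') \<le> h (Suc q)" using hh_mono assms(3) by simp
  have hp: "0 < h (Suc q')" using h_pos[OF d1 d2 d3] .
  have Rp: "0 < real R" using R_pos[OF c1 c2 c3] .
  have "h (Suc q') / (real R * AA q') \<le> h (Suc q) / (real R * AA q)"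
    by (rule frac_le) (use hq hp Rp A1 AA in auto)
  then show ?thesis unfolding ee_def .
qed

definition QQ :: "real \<Rightarrow> real \<Rightarrow> bool" where "QQ u v \<longleftrightarrow> (gg u = gg v \<longrightarrow> v \<le> u)"

lemma osc_facts:
  assumes "cnd q"
  shows "gg (h (a q) + ee q) = 0" "0 < ee q" "ee q \<le> \<delta> / 2" "1 \<le> a q" "a q \<le> q"
proof -
  have c1: "1 \<le> q" and c2: "real (Suc q) * \<delta> < 1" and c3: "2 \<le> a q \<Longrightarrow> 2 \<le> \<delta> * AA q"
    using assms unfolding cnd_def by auto
  show e0: "0 < ee q" using e_pos[OF c1 c2 c3] .
  show es: "ee q \<le> \<delta> / 2" using e_small[OF c1 c2 c3] .
  show "gg (h (a q) + ee q) = 0" by (rule gg_osc) (use e0 es dpos in auto)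
  show "1 \<le> a q" using a_ge1 .
  show "a q \<le> q" using a_le[OF c1] .
qed

lemma Q_in:
  assumes c: "cnd q" and u: "u \<in> set (rnd q)" and v: "v \<in> set (rnd q)"
  shows "QQ u v"
proof -
  note of = osc_facts[OF c]
  have hg: "\<And>j. gg (h j) \<noteq> 0" using gg_h by simp
  show ?thesis unfolding QQ_def
  proof
    assume g: "gg u = gg v"
    from u v show "v \<le> u" unfolding set_rnd
    proof (elim insertE imageE)
      fix j j' assume "u = h j'" "j' \<in> {a q..q}" "v = h j" "j \<in> {a q..q}"
      then show ?thesis using g gg_h window[of q j j'] by auto
    qed (use g hg of(1) in auto)
  qed
qed

lemma Q_across:
  assumes c: "cnd q" and c': "cnd q'" and qq: "q < q'" and u: "u \<in> set (rnd q)" and v: "v \<in> set (rnd q')"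
  shows "QQ u v"
proof -
  note of = osc_facts[OF c] and of' = osc_facts[OF c']
  have hg: "\<And>j. gg (h j) \<noteq> 0" using gg_h by simp
  have am: "a q \<le> a q'" using a_mono qq by simp
  show ?thesis unfolding QQ_def
  proof
    assume g: "gg u = gg v"
    from u v show "v \<le> u" unfolding set_rnd
    proof (elim insertE imageE)
      assume uu: "u = h (a q) + ee q" and vv: "v = h (a q') + ee q'"
      show ?thesis
      proof (cases "a q = a q'")
        case True
        then show ?thesis using e_mono[OF c c' _ True] qq uu vv by simp
      next
        case False
        then have "a q < a q'" using am by simp
        then have "h (a q') + \<delta> \<le> h (a q)" using hh_gap by simp
        then show ?thesis using uu vv of of' by simp
      qed
    next
      fix j j' assume uu: "u = h j" "j \<in> {a q..q}" and vv: "v = h j'" "j' \<in> {a q'..q'}"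
      have m: "j mod L = j' mod L" using g uu vv gg_h by simp
      show ?thesis
      proof (cases "j \<le> j'")
        case True then show ?thesis using uu vv hh_mono by simp
      next
        case False
        then have "j = j'" using window[of q' j j'] uu vv m qq by auto
        then show ?thesis using False by simp
      qed
    qed (use g hg of(1) of'(1) in auto)
  qed
qed

lemma sorted_all_pairs: "(\<And>u v. u \<in> set xs \<Longrightarrow> v \<in> set xs \<Longrightarrow> Q u v) \<Longrightarrow> sorted_wrt Q xs"
  by (induction xs) auto

lemma sorted_concat:
  "(\<And>i. i \<in> set xs \<Longrightarrow> sorted_wrt Q (F i)) \<Longrightarrow>
   sorted_wrt (\<lambda>i j. \<forall>u\<in>set (F i). \<forall>v\<in>set (F j). Q u v) xs \<Longrightarrow>
   sorted_wrt Q (concat (map F xs))"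
  by (induction xs) (auto simp: sorted_wrt_append)

lemma sig_sorted:
  assumes c: "\<And>q. 1 \<le> q \<Longrightarrow> q \<le> P \<Longrightarrow> cnd q"
  shows "sorted_wrt (\<lambda>u v. gg u = gg v \<longrightarrow> v \<le> u) (sig P)"
proof -
  have s1: "sorted_wrt QQ (concat (map ph [1..<Suc P]))"
  proof (rule sorted_concat)
    fix i assume i: "i \<in> set [1..<Suc P]"
    have ci: "cnd i" using i by (intro c) auto
    show "sorted_wrt QQ (ph i)"
    proof (rule sorted_all_pairs)
      fix u v assume "u \<in> set (ph i)" "v \<in> set (ph i)"
      then show "QQ u v" using Q_in[OF ci, of u v] set_ph[of i] by auto
    qed
  next
    have "sorted_wrt (<) [1..<Suc P]" by (rule sorted_wrt_upt)
    then show "sorted_wrt (\<lambda>i j. \<forall>u\<in>set (ph i). \<forall>v\<in>set (ph j). QQ u v) [1..<Suc P]"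
    proof (rule sorted_wrt_mono_rel[rotated])
      fix i j assume i: "i \<in> set [1..<Suc P]" and j: "j \<in> set [1..<Suc P]" and ij: "i < j"
      have ci: "cnd i" using i by (intro c) auto
      have cj: "cnd j" using j by (intro c) auto
      show "\<forall>u\<in>set (ph i). \<forall>v\<in>set (ph j). QQ u v"
      proof (intro ballI)
        fix u v assume "u \<in> set (ph i)" "v \<in> set (ph j)"
        then have "u \<in> set (rnd i)" "v \<in> set (rnd j)" using set_ph by auto
        then show "QQ u v" using Q_across[OF ci cj ij] by blast
      qed
    qed
  qed
  have s2: "\<forall>v\<in>set (concat (map ph [1..<Suc P])). QQ (h 1) v"
  proof
    fix v assume "v \<in> set (concat (map ph [1..<Suc P]))"
    then obtain q where q: "1 \<le> q" "q \<le> P" "v \<in> set (rnd q)" using set_ph by fastforce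
    note of = osc_facts[OF c[OF q(1,2)]]
    have vv: "v = h (a q) + ee q \<or> (\<exists>j. a q \<le> j \<and> j \<le> q \<and> v = h j)"
      using q(3) unfolding set_rnd by auto
    then show "QQ (h 1) v"
    proof
      assume "v = h (a q) + ee q" then show ?thesis using of gg_h by (simp add: QQ_def)
    next
      assume "\<exists>j. a q \<le> j \<and> j \<le> q \<and> v = h j"
      then obtain j where "a q \<le> j" "v = h j" by blast
      then show ?thesis using hh_mono[of 1 j] of by (auto simp: QQ_def)
    qed
  qed
  have "sorted_wrt QQ (sig P)" unfolding sig_def using s1 s2 by simp
  moreover have "QQ = (\<lambda>u v. gg u = gg v \<longrightarrow> v \<le> u)" by (auto simp: QQ_def fun_eq_iff)
  ultimately show ?thesis by simp
qed

lemma OPT_upper: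
  assumes c: "\<And>q. 1 \<le> q \<Longrightarrow> q \<le> P \<Longrightarrow> cnd q" and d1: "\<delta> < 1"
  shows "OPT (sig P) \<le> 2 * real (Suc L)"
proof -
  have "OPT (sig P) \<le> 2 * 1 * real (Suc L)"
  proof (rule OPT_le)
    show "\<forall>r\<in>set (sig P). 0 < r \<and> r \<le> 1" using sig_vals[OF c d1] by blast
    show "\<forall>r\<in>set (sig P). gg r < Suc L" unfolding gg_def using L1 by auto
    show "sorted_wrt (\<lambda>u v. gg u = gg v \<longrightarrow> v \<le> u) (sig P)" by (rule sig_sorted[OF c])
  qed simp
  then show ?thesis by simp
qed

end


lemma exp_lin:
  fixes c :: real
  assumes c1: "1 < c" and a0: "0 \<le> \<alpha>" and b0: "0 \<le> \<beta>"
  shows "\<exists>L. 1 \<le> L \<and> \<alpha> * real L + \<beta> \<le> c ^ (L - N)"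
proof -
  define d where "d = c - 1"
  have d0: "0 < d" using c1 d_def by simp
  define n where "n = nat \<lceil>(\<alpha> * (real N + 2) + \<beta>) / d\<^sup>2\<rceil> + 1"
  have n1: "1 \<le> n" unfolding n_def by simp
  have nd: "\<alpha> * (real N + 2) + \<beta> \<le> real n * d\<^sup>2"
  proof -
    have "(\<alpha> * (real N + 2) + \<beta>) / d\<^sup>2 \<le> real n" unfolding n_def by linarith
    then show ?thesis using d0 by (simp add: divide_le_eq)
  qed
  have bern: "real n * d \<le> c ^ n"
  proof -
    have "1 + real n * d \<le> (1 + d) ^ n" by (rule Bernoulli_inequality) (use d0 in simp)
    then show ?thesis unfolding d_def by simp
  qed
  have c2: "(real n * d)\<^sup>2 \<le> c ^ (2 * n)"
  proof -
    have "(real n * d)\<^sup>2 \<le> (c ^ n)\<^sup>2" using bern d0 by (intro power_mono) auto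
    then show ?thesis by (simp add: power_mult[symmetric] mult.commute)
  qed
  define L where "L = N + 2 * n"
  have LN: "L - N = 2 * n" unfolding L_def by simp
  have "\<alpha> * real L + \<beta> = \<alpha> * real N + 2 * \<alpha> * real n + \<beta>" unfolding L_def by (simp add: algebra_simps)
  also have "\<dots> \<le> real n * (\<alpha> * (real N + 2) + \<beta>)"
  proof -
    have "\<alpha> * real N \<le> real n * (\<alpha> * real N)" using n1 a0 mult_right_mono[of 1 "real n" "\<alpha> * real N"] by simp
    moreover have "\<beta> \<le> real n * \<beta>" using n1 b0 mult_right_mono[of 1 "real n" \<beta>] by simp
    ultimately show ?thesis by (simp add: algebra_simps)
  qed
  also have "\<dots> \<le> real n * (real n * d\<^sup>2)" using nd by (intro mult_left_mono) auto
  also have "\<dots> = (real n * d)\<^sup>2" by (simp add: power2_eq_square)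
  also have "\<dots> \<le> c ^ (L - N)" using c2 LN by simp
  finally show ?thesis using n1 L_def by (intro exI[of _ L]) auto
qed

lemma prod_lower:
  fixes s :: "nat \<Rightarrow> real"
  assumes sge: "\<And>i. 2 \<le> i \<Longrightarrow> 1 \<le> s i" and cN: "\<And>i. N \<le> i \<Longrightarrow> c \<le> s i" and c1: "1 \<le> c"
    and m1: "1 \<le> m"
  shows "c ^ (n - N) \<le> prod s {Suc m..m + n}"
proof (induction n)
  case 0 then show ?case by simp
next
  case (Suc n)
  have eq: "prod s {Suc m..m + Suc n} = s (Suc (m + n)) * prod s {Suc m..m + n}"
    by (subst prod.nat_ivl_Suc'[symmetric]) auto
  have pg: "1 \<le> prod s {Suc m..m + n}" by (rule prod_ge_1) (use sge m1 in auto)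
  have sg: "1 \<le> s (Suc (m + n))" using sge m1 by simp
  show ?case
  proof (cases "Suc n \<le> N")
    case True
    then have "c ^ (Suc n - N) = 1" by simp
    moreover have "1 \<le> s (Suc (m + n)) * prod s {Suc m..m + n}"
      using mult_mono[OF sg pg _ zero_le_one] sg by simp
    ultimately show ?thesis using eq by (simp add: mult.commute)
  next
    case False
    then have pw: "c ^ (Suc n - N) = c * c ^ (n - N)" by (simp add: Suc_diff_le)
    have "c \<le> s (Suc (m + n))" using cN False by simp
    moreover have "0 \<le> c ^ (n - N)" using c1 by simp
    ultimately have "c * c ^ (n - N) \<le> s (Suc (m + n)) * prod s {Suc m..m + n}"
      using Suc.IH c1 by (intro mult_mono) auto
    then show ?thesis using eq pw by (simp add: mult.commute)
  qed
qed



theorem core: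
  fixes s :: "nat \<Rightarrow> real"
  assumes sge: "\<And>i. 2 \<le> i \<Longrightarrow> 1 \<le> s i" and c1: "1 < c" and cN: "\<And>i. N \<le> i \<Longrightarrow> c \<le> s i"
  shows "\<not> DC_competitive s"
proof
  assume "DC_competitive s"
  then obtain \<rho> C where comp: "\<And>\<sigma>. (\<forall>r\<in>set \<sigma>. 0 \<le> r) \<Longrightarrow> ALG_DC s \<sigma> \<le> \<rho> * OPT \<sigma> + C"
    unfolding DC_competitive_def by blast
  define \<rho>' where "\<rho>' = max \<rho> 0"
  have r0: "0 \<le> \<rho>'" unfolding \<rho>'_def by simp
  obtain L where L1: "1 \<le> L"
    and Lb: "16 * \<rho>' * real L + (16 * \<rho>' + 8 * \<bar>C\<bar> + 16) \<le> c ^ (L - N)"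
    using exp_lin[OF c1, of "16 * \<rho>'" "16 * \<rho>' + 8 * \<bar>C\<bar> + 16" N] r0 by auto
  define M where "M = nat \<lceil>4 * \<rho>' * (real L + 1) + 2 * \<bar>C\<bar>\<rceil> + 3"
  have M3: "3 \<le> M" unfolding M_def by simp
  have Mge: "4 * \<rho>' * (real L + 1) + 2 * \<bar>C\<bar> + 3 \<le> real M" unfolding M_def by linarith
  have Mle: "real M \<le> 4 * \<rho>' * (real L + 1) + 2 * \<bar>C\<bar> + 4"
  proof -
    have "0 \<le> 4 * \<rho>' * (real L + 1) + 2 * \<bar>C\<bar>" using r0 by simp
    then show ?thesis unfolding M_def by linarith
  qed
  define \<delta> where "\<delta> = 1 / (2 * real M)"
  define R where "R = 4 * M"
  define P where "P = M - 2"
  have Mpos: "0 < real M" using M3 by simp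
  have dpos: "0 < \<delta>" unfolding \<delta>_def using Mpos by simp
  have dR: "\<delta> * real R = 2" unfolding \<delta>_def R_def using Mpos by simp
  interpret cons s L \<delta> R
    by unfold_locales (use sge dpos dR L1 in auto)
  have d1: "\<delta> < 1" unfolding \<delta>_def using M3 by (simp add: field_simps)
  have cnds: "cnd q" if q: "1 \<le> q" "q \<le> P" for q
    unfolding cnd_def
  proof (intro conjI impI)
    show "1 \<le> q" using q by simp
    have "real (Suc q) < 2 * real M" using q M3 unfolding P_def by simp
    then show "real (Suc q) * \<delta> < 1" unfolding \<delta>_def using Mpos by (simp add: field_simps)
  next
    assume a2: "2 \<le> aa L q"
    then have qL: "\<not> q \<le> L" unfolding aa_def by auto
    then have aq: "aa L q = q + 1 - L" unfolding aa_def by simp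
    have sq: "Suc q = aa L q + L" using aq qL by simp
    have "c ^ (L - N) \<le> prod s {Suc (aa L q)..aa L q + L}"
      by (rule prod_lower[OF sge cN]) (use c1 a2 in auto)
    then have "c ^ (L - N) \<le> AA q" unfolding AA_def using sq by simp
    moreover have "4 * real M \<le> c ^ (L - N)" using Lb Mle by (simp add: algebra_simps)
    ultimately have "4 * real M \<le> AA q" by simp
    then have "\<delta> * (4 * real M) \<le> \<delta> * AA q" using dpos by (simp add: mult_left_mono)
    moreover have "\<delta> * (4 * real M) = 2" unfolding \<delta>_def using Mpos by simp
    ultimately show "2 \<le> \<delta> * AA q" by simp
  qed
  have alg: "real (Suc P) * hh \<delta> (P + 2) \<le> ALG_DC s (sig P)" by (rule ALG_lower[OF cnds d1]) auto
  have hP: "hh \<delta> (P + 2) = 1 / 2" unfolding hh_def \<delta>_def P_def using M3 Mpos by (simp add: field_simps)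
  have sP: "real (Suc P) = real M - 1" unfolding P_def using M3 by simp
  have opt: "OPT (sig P) \<le> 2 * real (Suc L)" by (rule OPT_upper[OF cnds d1]) auto
  have nn: "\<forall>r\<in>set (sig P). 0 \<le> r" using sig_vals[OF cnds d1] by fastforce
  have opt0: "0 \<le> OPT (sig P)" by (rule OPT_nonneg[OF nn])
  have "\<rho> * OPT (sig P) \<le> \<rho>' * OPT (sig P)" unfolding \<rho>'_def using opt0 by (simp add: mult_right_mono)
  also have "\<dots> \<le> \<rho>' * (2 * real (Suc L))" using opt r0 by (simp add: mult_left_mono)
  finally have ro: "\<rho> * OPT (sig P) \<le> \<rho>' * (2 * real (Suc L))" .
  have c: "ALG_DC s (sig P) \<le> \<rho> * OPT (sig P) + C" by (rule comp[OF nn])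
  have e1: "real (Suc P) * hh \<delta> (P + 2) = (real M - 1) / 2" unfolding hP sP by simp
  have e2: "\<rho>' * (2 * real (Suc L)) = 2 * (\<rho>' * real L) + 2 * \<rho>'" by (simp add: algebra_simps)
  have e3: "4 * \<rho>' * (real L + 1) = 4 * (\<rho>' * real L) + 4 * \<rho>'" by (simp add: algebra_simps)
  have "C \<le> \<bar>C\<bar>" by simp
  moreover have a: "real M - 1 \<le> 2 * ALG_DC s (sig P)"
  proof -
    have "(real M - 1) / 2 \<le> ALG_DC s (sig P)" using alg unfolding e1 .
    then show ?thesis by (simp add: field_simps)
  qed
  moreover obtain t where t: "t = \<rho>' * real L" by blast
  moreover obtain u where u: "u = \<rho> * OPT (sig P)" by blast
  moreover have ro2: "u \<le> 2 * t + 2 * \<rho>'" using ro e2 t u by simp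
  moreover have M2: "4 * t + 4 * \<rho>' + 2 * \<bar>C\<bar> + 3 \<le> real M" using Mge e3 t by simp
  moreover have c2: "ALG_DC s (sig P) \<le> u + C" using c u by simp
  moreover obtain w where w: "w = \<bar>C\<bar>" by blast
  ultimately have f: "real M - 1 \<le> 2 * (2 * t + 2 * \<rho>' + w)" "4 * t + 4 * \<rho>' + 2 * w + 3 \<le> real M"
    by linarith+
  obtain z where z: "z = 2 * t + 2 * \<rho>' + w" by blast
  have g1: "real M - 1 \<le> 2 * z" using f(1) z by simp
  have g2: "2 * z + 3 \<le> real M" using f(2) z by (simp add: algebra_simps)
  show False using g1 g2 by linarith
qed



theorem lemma3:
  fixes s :: "nat \<Rightarrow> real"
  assumes speeds: "\<And>i. 2 \<le> i \<Longrightarrow> 1 \<le> s i"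
    and monotonic: "(\<forall>i j. 2 \<le> i \<longrightarrow> i \<le> j \<longrightarrow> s i \<le> s j) \<or>
                    (\<forall>i j. 2 \<le> i \<longrightarrow> i \<le> j \<longrightarrow> s j \<le> s i)"
  shows "((\<exists>f :: nat \<Rightarrow> real. \<not> bdd_above (range f) \<and>
            (\<forall>n k. 2 \<le> k \<longrightarrow> (\<Prod>i=k..k+n. s i) \<ge> f n))
            \<longrightarrow> \<not> DC_competitive s)
       \<and> (liminf (\<lambda>i. ereal (s i)) > 1 \<longrightarrow> \<not> DC_competitive s)"
proof (intro conjI impI)
  assume "\<exists>f :: nat \<Rightarrow> real. \<not> bdd_above (range f) \<and> (\<forall>n k. 2 \<le> k \<longrightarrow> (\<Prod>i=k..k+n. s i) \<ge> f n)"
  then obtain f :: "nat \<Rightarrow> real" where nb: "\<not> bdd_above (range f)"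
    and fp: "\<And>n k. 2 \<le> k \<Longrightarrow> f n \<le> (\<Prod>i=k..k+n. s i)" by auto
  obtain n0 where fn0: "1 < f n0"
  proof -
    have "\<not> (\<forall>n. f n \<le> 1)" using nb by (auto simp: bdd_above_def)
    then show ?thesis using that by (auto simp: not_le)
  qed
  show "\<not> DC_competitive s"
    using monotonic
  proof
    assume inc: "\<forall>i j. 2 \<le> i \<longrightarrow> i \<le> j \<longrightarrow> s i \<le> s j"
    have "\<exists>i\<in>{2..2+n0}. 1 < s i"
    proof (rule ccontr)
      assume "\<not> (\<exists>i\<in>{2..2+n0}. 1 < s i)"
      then have "(\<Prod>i=2..2+n0. s i) \<le> 1"
      proof (intro prod_le_1 conjI)
        fix x assume "x \<in> {2..2+n0}"
        then have "1 \<le> s x" using speeds by simp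
        then show "0 \<le> s x" by simp
      qed (auto simp: not_less)
      then show False using fp[of 2 n0] fn0 by simp
    qed
    then obtain i where i: "2 \<le> i" "1 < s i" by auto
    show ?thesis by (rule core[OF speeds i(2), where N = i]) (use inc i in auto)
  next
    assume dec: "\<forall>i j. 2 \<le> i \<longrightarrow> i \<le> j \<longrightarrow> s j \<le> s i"
    define c where "c = root (Suc n0) (f n0)"
    have c1: "1 < c" unfolding c_def using fn0 by simp
    have cs: "c \<le> s k" if k: "2 \<le> k" for k
    proof -
      have "(\<Prod>i=k..k+n0. s i) \<le> (\<Prod>i=k..k+n0. s k)"
      proof (rule prod_mono, rule conjI)
        fix i assume i: "i \<in> {k..k+n0}"
        then have "1 \<le> s i" using speeds k by simp
        then show "0 \<le> s i" by simp
        show "s i \<le> s k" using dec k i by simp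
      qed
      also have "\<dots> = s k ^ Suc n0" by simp
      finally have "f n0 \<le> s k ^ Suc n0" using fp[OF k, of n0] by simp
      then have "root (Suc n0) (f n0) \<le> root (Suc n0) (s k ^ Suc n0)" by simp
      also have "\<dots> = s k" using speeds[OF k] by (intro real_root_power_cancel) auto
      finally show ?thesis unfolding c_def .
    qed
    show ?thesis by (rule core[OF speeds c1, where N = 2]) (use cs in auto)
  qed
next
  assume lim: "liminf (\<lambda>i. ereal (s i)) > 1"
  obtain z where z: "1 < z" "z < liminf (\<lambda>i. ereal (s i))" using dense[OF lim] by blast
  then obtain c where zc: "z = ereal c"
    by (cases z) auto
  have c1: "1 < c" using z(1) zc by simp
  have "eventually (\<lambda>i. ereal c < ereal (s i)) sequentially" using less_LiminfD[OF z(2)] zc by simp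
  then obtain N where Nf: "\<And>i. N \<le> i \<Longrightarrow> c < s i" unfolding eventually_sequentially by auto
  have Nf2: "\<And>i. N \<le> i \<Longrightarrow> c \<le> s i" using Nf less_imp_le by blast
  show "\<not> DC_competitive s" by (rule core[OF speeds c1 Nf2])
qed


end
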